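(* Let $\mathcal{V}$ be a variety and let $e$ be a unary term in the language of $\mathcal{V}$ with $\mathcal{V}\models e(e(x))=e(x)$. (1) The class of all $\mathbf{A}\in\mathcal{V}$ for which $e$ is separating is a prevariety, i.e. it is closed under isomorphic images, subalgebras and products. (2) For $\mathbf{A},\mathbf{B}\in\mathcal{V}$ consider the map $\mathrm{Hom}(\mathbf{A},\mathbf{B})\to\mathrm{Hom}(e(\mathbf{A}),e(\mathbf{B}))$, $\varphi\mapsto\varphi|_{e(A)}$. (i) If $e$ is dense for $\mathbf{A}$, this map is injective. (ii) If $e$ is dense for $\mathbf{A}$ and separating for $\mathbf{B}$, this map is surjective.
   Context: For an algebra $\mathbf{A}$ and a unary term $e$ with $\mathbf{A}\models e(e(x))=e(x)$, the localization $e(\mathbf{A})$ is the algebra with universe $e(A)$ whose fundamental operation symbols are the symbols $et$, one for each term $t$ in the language of $\mathbf{A}$ (with the arity of $t$), where $et$ is interpreted as the restriction to $e(A)$ of the term operation $e(t(x_1,\dots,x_n))$ of $\mathbf{A}$ (under which $e(A)$ is closed). This fixes a common similarity type for all $e(\mathbf{A})$, $\mathbf{A}$ in a class satisfying $e^2=e$. For a homomorphism $\varphi:\mathbf{B}\to\mathbf{C}$, $\varphi|_{e(B)}$ is a homomorphism $e(\mathbf{B})\to e(\mathbf{C})$. The term $e$ separates $\mathbf{A}$ if for all $a\neq b$ in $A$ there is a unary term $g$ with $e(g(a))\neq e(g(b))$. The term $e$ is dense for $\mathbf{A}$ if $\mathbf{A}$ is generated as an algebra by $e(A)$. *)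

theory Defs
  imports Main "HOL-Library.FuncSet"
begin

datatype 'f trm = Var nat | Fn 'f "'f trm list"

fun wf_trm :: "('f \<Rightarrow> nat) \<Rightarrow> 'f trm \<Rightarrow> bool" where
  "wf_trm ar (Var n) = True"
| "wf_trm ar (Fn f ts) = (length ts = ar f \<and> (\<forall>t\<in>set ts. wf_trm ar t))"

fun vars :: "'f trm \<Rightarrow> nat set" where
  "vars (Var n) = {n}"
| "vars (Fn f ts) = (\<Union>t\<in>set ts. vars t)"

fun eval :: "('f \<Rightarrow> 'a list \<Rightarrow> 'a) \<Rightarrow> 'f trm \<Rightarrow> (nat \<Rightarrow> 'a) \<Rightarrow> 'a" where
  "eval I (Var n) \<rho> = \<rho> n"
| "eval I (Fn f ts) \<rho> = I f (map (\<lambda>t. eval I t \<rho>) ts)"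

record ('s, 'a) alg =
  univ :: "'a set"
  ops :: "'s \<Rightarrow> 'a list \<Rightarrow> 'a"

definition is_alg :: "'s set \<Rightarrow> ('s \<Rightarrow> nat) \<Rightarrow> ('s, 'a) alg \<Rightarrow> bool" where
  "is_alg S ar A \<longleftrightarrow> (\<forall>f\<in>S. \<forall>xs. length xs = ar f \<and> set xs \<subseteq> univ A \<longrightarrow> ops A f xs \<in> univ A)"

definition hom :: "'s set \<Rightarrow> ('s \<Rightarrow> nat) \<Rightarrow> ('s, 'a) alg \<Rightarrow> ('s, 'b) alg \<Rightarrow> ('a \<Rightarrow> 'b) \<Rightarrow> bool" where
  "hom S ar A B h \<longleftrightarrow> (\<forall>x\<in>univ A. h x \<in> univ B) \<and>
     (\<forall>f\<in>S. \<forall>xs. length xs = ar f \<and> set xs \<subseteq> univ A \<longrightarrow> h (ops A f xs) = ops B f (map h xs))"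

definition iso :: "'s set \<Rightarrow> ('s \<Rightarrow> nat) \<Rightarrow> ('s, 'a) alg \<Rightarrow> ('s, 'b) alg \<Rightarrow> ('a \<Rightarrow> 'b) \<Rightarrow> bool" where
  "iso S ar A B h \<longleftrightarrow> is_alg S ar B \<and> hom S ar A B h \<and> bij_betw h (univ A) (univ B)"

definition subalg :: "'s set \<Rightarrow> ('s \<Rightarrow> nat) \<Rightarrow> ('s, 'a) alg \<Rightarrow> ('s, 'a) alg \<Rightarrow> bool" where
  "subalg S ar B A \<longleftrightarrow> is_alg S ar B \<and> univ B \<subseteq> univ A \<and>
     (\<forall>f\<in>S. \<forall>xs. length xs = ar f \<and> set xs \<subseteq> univ B \<longrightarrow> ops B f xs = ops A f xs)"

definition prod_alg :: "'i set \<Rightarrow> ('i \<Rightarrow> ('s, 'a) alg) \<Rightarrow> ('s, 'i \<Rightarrow> 'a) alg" where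
  "prod_alg I As = \<lparr> univ = (\<Pi>\<^sub>E i\<in>I. univ (As i)),
     ops = (\<lambda>f xs. restrict (\<lambda>i. ops (As i) f (map (\<lambda>x. x i) xs)) I) \<rparr>"

definition closed_in :: "'s set \<Rightarrow> ('s \<Rightarrow> nat) \<Rightarrow> ('s, 'a) alg \<Rightarrow> 'a set \<Rightarrow> bool" where
  "closed_in S ar A Y \<longleftrightarrow> (\<forall>f\<in>S. \<forall>xs. length xs = ar f \<and> set xs \<subseteq> Y \<longrightarrow> ops A f xs \<in> Y)"

definition Sg :: "'s set \<Rightarrow> ('s \<Rightarrow> nat) \<Rightarrow> ('s, 'a) alg \<Rightarrow> 'a set \<Rightarrow> 'a set" where
  "Sg S ar A X = \<Inter>{Y. X \<subseteq> Y \<and> Y \<subseteq> univ A \<and> closed_in S ar A Y}"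

definition models :: "('f \<Rightarrow> nat) \<Rightarrow> ('f trm \<times> 'f trm) set \<Rightarrow> ('f, 'a) alg \<Rightarrow> bool" where
  "models ar E A \<longleftrightarrow> is_alg UNIV ar A \<and>
     (\<forall>(s, t)\<in>E. \<forall>\<rho>. (\<forall>n. \<rho> n \<in> univ A) \<longrightarrow> eval (ops A) s \<rho> = eval (ops A) t \<rho>)"

definition unary :: "('f \<Rightarrow> nat) \<Rightarrow> 'f trm \<Rightarrow> bool" where
  "unary ar t \<longleftrightarrow> wf_trm ar t \<and> vars t \<subseteq> {0}"

definition app1 :: "('f, 'a) alg \<Rightarrow> 'f trm \<Rightarrow> 'a \<Rightarrow> 'a" where
  "app1 A t a = eval (ops A) t (\<lambda>_. a)"

definition separates :: "('f \<Rightarrow> nat) \<Rightarrow> 'f trm \<Rightarrow> ('f, 'a) alg \<Rightarrow> bool" where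
  "separates ar e A \<longleftrightarrow> (\<forall>a\<in>univ A. \<forall>b\<in>univ A. a \<noteq> b \<longrightarrow>
     (\<exists>g. unary ar g \<and> app1 A e (app1 A g a) \<noteq> app1 A e (app1 A g b)))"

definition dense :: "('f \<Rightarrow> nat) \<Rightarrow> 'f trm \<Rightarrow> ('f, 'a) alg \<Rightarrow> bool" where
  "dense ar e A \<longleftrightarrow> univ A = Sg UNIV ar A (app1 A e ` univ A)"

text \<open>Symbols of the localized language: pairs (t, n) of a term t whose variables are among
  x_0..x_(n-1), with arity n (symbol "e t").\<close>
definition loc_syms :: "('f \<Rightarrow> nat) \<Rightarrow> ('f trm \<times> nat) set" where
  "loc_syms ar = {(t, n). wf_trm ar t \<and> vars t \<subseteq> {..<n}}"

definition loc_ar :: "'f trm \<times> nat \<Rightarrow> nat" where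
  "loc_ar = snd"

definition loc :: "'f trm \<Rightarrow> ('f, 'a) alg \<Rightarrow> ('f trm \<times> nat, 'a) alg" where
  "loc e A = \<lparr> univ = app1 A e ` univ A,
     ops = (\<lambda>(t, n) xs. app1 A e (eval (ops A) t (\<lambda>i. if i < length xs then xs ! i else undefined))) \<rparr>"

end

theory Submission
  imports Defs
begin

fun subst :: "(nat \<Rightarrow> 'f trm) \<Rightarrow> 'f trm \<Rightarrow> 'f trm" where
  "subst \<sigma> (Var n) = \<sigma> n"
| "subst \<sigma> (Fn f ts) = Fn f (map (subst \<sigma>) ts)"

lemma eval_cong: "(\<forall>n\<in>vars t. \<rho> n = \<sigma> n) \<Longrightarrow> eval I t \<rho> = eval I t \<sigma>"
  by (induction t) (auto intro!: arg_cong[where f="I _"])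

lemma eval_subst: "eval I (subst \<sigma> t) \<rho> = eval I t (\<lambda>i. eval I (\<sigma> i) \<rho>)"
  by (induction t) (auto intro!: arg_cong[where f="I _"])

lemma wf_subst: "wf_trm ar t \<Longrightarrow> (\<forall>i. wf_trm ar (\<sigma> i)) \<Longrightarrow> wf_trm ar (subst \<sigma> t)"
  by (induction t) auto

lemma vars_subst: "vars (subst \<sigma> t) = (\<Union>i\<in>vars t. vars (\<sigma> i))"
  by (induction t) auto

lemma finite_vars: "finite (vars t)"
  by (induction t) auto

lemma eval_closed: "is_alg UNIV ar A \<Longrightarrow> wf_trm ar t \<Longrightarrow> (\<forall>n. \<rho> n \<in> univ A) \<Longrightarrow> eval (ops A) t \<rho> \<in> univ A"
proof (induction t)
  case (Var x)
  then show ?case by simp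
next
  case (Fn f ts)
  have "set (map (\<lambda>t. eval (ops A) t \<rho>) ts) \<subseteq> univ A" using Fn by auto
  then show ?case using Fn.prems unfolding is_alg_def by auto
qed

lemma hom_eval: "hom UNIV ar A B h \<Longrightarrow> is_alg UNIV ar A \<Longrightarrow> wf_trm ar t \<Longrightarrow> (\<forall>n. \<rho> n \<in> univ A)
  \<Longrightarrow> h (eval (ops A) t \<rho>) = eval (ops B) t (h \<circ> \<rho>)"
proof (induction t)
  case (Var x)
  then show ?case by simp
next
  case (Fn f ts)
  have "set (map (\<lambda>t. eval (ops A) t \<rho>) ts) \<subseteq> univ A" using Fn.prems eval_closed[OF Fn.prems(2)] by auto
  then have "h (eval (ops A) (Fn f ts) \<rho>) = ops B f (map h (map (\<lambda>t. eval (ops A) t \<rho>) ts))"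
    using Fn.prems unfolding hom_def by auto
  also have "\<dots> = eval (ops B) (Fn f ts) (h \<circ> \<rho>)"
    using Fn by (auto simp: o_def intro!: arg_cong[where f="ops B f"])
  finally show ?case .
qed

lemma subalg_eval: "subalg UNIV ar B A \<Longrightarrow> wf_trm ar t \<Longrightarrow> (\<forall>n. \<rho> n \<in> univ B)
  \<Longrightarrow> eval (ops B) t \<rho> = eval (ops A) t \<rho>"
proof (induction t)
  case (Var x)
  then show ?case by simp
next
  case (Fn f ts)
  have cl: "is_alg UNIV ar B" using Fn.prems unfolding subalg_def by auto
  have "set (map (\<lambda>t. eval (ops B) t \<rho>) ts) \<subseteq> univ B" using Fn.prems eval_closed[OF cl] by auto
  then have "eval (ops B) (Fn f ts) \<rho> = ops A f (map (\<lambda>t. eval (ops B) t \<rho>) ts)"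
    using Fn.prems unfolding subalg_def by auto
  also have "\<dots> = eval (ops A) (Fn f ts) \<rho>"
    using Fn by (auto intro!: arg_cong[where f="ops A f"])
  finally show ?case .
qed

lemma prod_eval: "(\<forall>n. \<rho> n \<in> (\<Pi>\<^sub>E i\<in>I. univ (As i))) \<Longrightarrow>
  eval (ops (prod_alg I As)) t \<rho> = restrict (\<lambda>i. eval (ops (As i)) t (\<lambda>n. \<rho> n i)) I"
proof (induction t)
  case (Var x)
  then show ?case by (auto simp: restrict_def PiE_def extensional_def)
next
  case (Fn f ts)
  then show ?case by (auto simp: prod_alg_def restrict_def o_def intro!: ext arg_cong[where f="ops (As _) f"])
qed


lemma app1_closed: "is_alg UNIV ar A \<Longrightarrow> wf_trm ar t \<Longrightarrow> a \<in> univ A \<Longrightarrow> app1 A t a \<in> univ A"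
  unfolding app1_def by (rule eval_closed) auto

lemma hom_app1: "hom UNIV ar A B h \<Longrightarrow> is_alg UNIV ar A \<Longrightarrow> wf_trm ar t \<Longrightarrow> a \<in> univ A
  \<Longrightarrow> h (app1 A t a) = app1 B t (h a)"
  unfolding app1_def using hom_eval[of ar A B h t "\<lambda>_. a"] by (simp add: o_def)

lemma models_eq:
  assumes "models ar E A" "(s, t) \<in> E" "\<forall>n. \<rho> n \<in> univ A"
  shows "eval (ops A) s \<rho> = eval (ops A) t \<rho>"
proof -
  have "case (s, t) of (s, t) \<Rightarrow> \<forall>\<rho>. (\<forall>n. \<rho> n \<in> univ A) \<longrightarrow> eval (ops A) s \<rho> = eval (ops A) t \<rho>"
    using assms(1,2) unfolding models_def by blast
  then show ?thesis using assms(3) by simp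
qed

lemma iso_part:
  assumes E_wf: "\<forall>(s, t)\<in>E. wf_trm ar s \<and> wf_trm ar t"
    and e_unary: "unary ar e"
    and mA: "models ar E A" and sA: "separates ar e A" and iso: "iso UNIV ar A B h"
  shows "models ar E B \<and> separates ar e B"
proof -
  have isA: "is_alg UNIV ar A" using mA unfolding models_def by auto
  have isB: "is_alg UNIV ar B" and hh: "hom UNIV ar A B h" and bij: "bij_betw h (univ A) (univ B)"
    using iso unfolding iso_def by auto
  have we: "wf_trm ar e" using e_unary unfolding unary_def by auto
  define hi where "hi = inv_into (univ A) h"
  have hi1: "y \<in> univ B \<Longrightarrow> hi y \<in> univ A" for y
    using bij unfolding hi_def by (metis bij_betw_def inv_into_into)
  have hi2: "y \<in> univ B \<Longrightarrow> h (hi y) = y" for y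
    using bij unfolding hi_def by (metis bij_betw_def f_inv_into_f)
  have "models ar E B"
    unfolding models_def
  proof (intro conjI isB ballI allI impI, clarify)
    fix s t and \<rho> :: "nat \<Rightarrow> _" assume st: "(s, t) \<in> E" and \<rho>: "\<forall>n. \<rho> n \<in> univ B"
    define \<rho>' where "\<rho>' = (\<lambda>n. hi (\<rho> n))"
    have \<rho>'A: "\<forall>n. \<rho>' n \<in> univ A" using \<rho> hi1 \<rho>'_def by auto
    have eq: "h \<circ> \<rho>' = \<rho>" using \<rho> hi2 \<rho>'_def by auto
    have ws: "wf_trm ar s" "wf_trm ar t" using E_wf st by auto
    have "eval (ops A) s \<rho>' = eval (ops A) t \<rho>'" using mA st \<rho>'A unfolding models_def by auto
    then show "eval (ops B) s \<rho> = eval (ops B) t \<rho>"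
      using hom_eval[OF hh isA ws(1) \<rho>'A] hom_eval[OF hh isA ws(2) \<rho>'A] eq by simp
  qed
  moreover have "separates ar e B"
    unfolding separates_def
  proof (intro ballI impI)
    fix a b assume a: "a \<in> univ B" and b: "b \<in> univ B" and ab: "a \<noteq> b"
    have "hi a \<noteq> hi b" using hi2 a b ab by metis
    then obtain g where g: "unary ar g" and
      d: "app1 A e (app1 A g (hi a)) \<noteq> app1 A e (app1 A g (hi b))"
      using sA hi1 a b unfolding separates_def by blast
    have wg: "wf_trm ar g" using g unfolding unary_def by auto
    have k: "h (app1 A e (app1 A g (hi x))) = app1 B e (app1 B g x)" if "x \<in> univ B" for x
      using hom_app1[OF hh isA we app1_closed[OF isA wg hi1[OF that]]]
        hom_app1[OF hh isA wg hi1[OF that]] hi2[OF that] by simp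
    have inj: "inj_on h (univ A)" using bij bij_betw_def by auto
    have "h (app1 A e (app1 A g (hi a))) \<noteq> h (app1 A e (app1 A g (hi b)))"
      using d inj_onD[OF inj] app1_closed[OF isA we] app1_closed[OF isA wg] hi1 a b by metis
    then show "\<exists>g. unary ar g \<and> app1 B e (app1 B g a) \<noteq> app1 B e (app1 B g b)"
      using k a b g by auto
  qed
  ultimately show ?thesis by auto
qed

lemma sub_part:
  assumes E_wf: "\<forall>(s, t)\<in>E. wf_trm ar s \<and> wf_trm ar t"
    and e_unary: "unary ar e"
    and mA: "models ar E A" and sA: "separates ar e A" and sub: "subalg UNIV ar B A"
  shows "models ar E B \<and> separates ar e B"
proof -
  have isB: "is_alg UNIV ar B" and BA: "univ B \<subseteq> univ A" using sub unfolding subalg_def by auto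
  have we: "wf_trm ar e" using e_unary unfolding unary_def by auto
  have ap: "app1 B t a = app1 A t a" if "wf_trm ar t" "a \<in> univ B" for t a
    unfolding app1_def using subalg_eval[OF sub that(1)] that(2) by auto
  have "models ar E B"
    unfolding models_def
  proof (intro conjI isB ballI allI impI, clarify)
    fix s t and \<rho> :: "nat \<Rightarrow> _" assume st: "(s, t) \<in> E" and \<rho>: "\<forall>n. \<rho> n \<in> univ B"
    have ws: "wf_trm ar s" "wf_trm ar t" using E_wf st by auto
    have "eval (ops A) s \<rho> = eval (ops A) t \<rho>" using models_eq[OF mA st] \<rho> BA by auto
    then show "eval (ops B) s \<rho> = eval (ops B) t \<rho>"
      using subalg_eval[OF sub ws(1) \<rho>] subalg_eval[OF sub ws(2) \<rho>] by simp
  qed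
  moreover have "separates ar e B"
    unfolding separates_def
  proof (intro ballI impI)
    fix a b assume a: "a \<in> univ B" and b: "b \<in> univ B" and ab: "a \<noteq> b"
    then obtain g where g: "unary ar g" and
      d: "app1 A e (app1 A g a) \<noteq> app1 A e (app1 A g b)"
      using sA BA unfolding separates_def by blast
    have wg: "wf_trm ar g" using g unfolding unary_def by auto
    have "app1 B e (app1 B g x) = app1 A e (app1 A g x)" if "x \<in> univ B" for x
      using ap[OF we app1_closed[OF isB wg that]] ap[OF wg that] by simp
    then show "\<exists>g. unary ar g \<and> app1 B e (app1 B g a) \<noteq> app1 B e (app1 B g b)"
      using d a b g by auto
  qed
  ultimately show ?thesis by auto
qed

lemma prod_app1: "x \<in> (\<Pi>\<^sub>E i\<in>I. univ (As i)) \<Longrightarrow> i \<in> I \<Longrightarrow>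
  app1 (prod_alg I As) t x i = app1 (As i) t (x i)"
  unfolding app1_def using prod_eval[of "\<lambda>_. x" I As t] by simp

lemma prod_part:
  assumes E_wf: "\<forall>(s, t)\<in>E. wf_trm ar s \<and> wf_trm ar t"
    and e_unary: "unary ar e"
    and all: "\<forall>i\<in>I. models ar E (As i) \<and> separates ar e (As i)"
  shows "models ar E (prod_alg I As) \<and> separates ar e (prod_alg I As)"
proof -
  have isA: "is_alg UNIV ar (As i)" if "i \<in> I" for i using all that unfolding models_def by auto
  have we: "wf_trm ar e" using e_unary unfolding unary_def by auto
  have isP: "is_alg UNIV ar (prod_alg I As)"
    unfolding is_alg_def
  proof (intro ballI allI impI)
    fix f xs assume "length xs = ar f \<and> set xs \<subseteq> univ (prod_alg I As)"
    then have l: "length xs = ar f" and s: "set xs \<subseteq> (\<Pi>\<^sub>E i\<in>I. univ (As i))"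
      by (auto simp: prod_alg_def)
    have "ops (As i) f (map (\<lambda>x. x i) xs) \<in> univ (As i)" if "i \<in> I" for i
    proof -
      have "set (map (\<lambda>x. x i) xs) \<subseteq> univ (As i)" using s that by auto
      then show ?thesis using isA[OF that] l unfolding is_alg_def by auto
    qed
    then show "ops (prod_alg I As) f xs \<in> univ (prod_alg I As)"
      by (auto simp: prod_alg_def)
  qed
  have "models ar E (prod_alg I As)"
    unfolding models_def
  proof (intro conjI isP ballI allI impI, clarify)
    fix s t and \<rho> :: "nat \<Rightarrow> _" assume st: "(s, t) \<in> E" and \<rho>: "\<forall>n. \<rho> n \<in> univ (prod_alg I As)"
    have \<rho>': "\<forall>n. \<rho> n \<in> (\<Pi>\<^sub>E i\<in>I. univ (As i))" using \<rho> by (simp add: prod_alg_def)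
    have "eval (ops (As i)) s (\<lambda>n. \<rho> n i) = eval (ops (As i)) t (\<lambda>n. \<rho> n i)" if "i \<in> I" for i
      using all that st \<rho>' models_eq[of ar E "As i" s t "\<lambda>n. \<rho> n i"] by (auto simp: PiE_def Pi_def)
    then show "eval (ops (prod_alg I As)) s \<rho> = eval (ops (prod_alg I As)) t \<rho>"
      unfolding prod_eval[OF \<rho>'] by (auto intro!: restrict_ext)
  qed
  moreover have "separates ar e (prod_alg I As)"
    unfolding separates_def
  proof (intro ballI impI)
    fix a b assume a: "a \<in> univ (prod_alg I As)" and b: "b \<in> univ (prod_alg I As)" and ab: "a \<noteq> b"
    have a': "a \<in> (\<Pi>\<^sub>E i\<in>I. univ (As i))" and b': "b \<in> (\<Pi>\<^sub>E i\<in>I. univ (As i))"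
      using a b by (auto simp: prod_alg_def)
    obtain i where i: "i \<in> I" and abi: "a i \<noteq> b i"
      using a' b' ab by (metis PiE_ext)
    obtain g where g: "unary ar g" and
      d: "app1 (As i) e (app1 (As i) g (a i)) \<noteq> app1 (As i) e (app1 (As i) g (b i))"
      using all i a' b' abi unfolding separates_def by (metis PiE_mem)
    have wg: "wf_trm ar g" using g unfolding unary_def by auto
    have k: "app1 (prod_alg I As) e (app1 (prod_alg I As) g x) i = app1 (As i) e (app1 (As i) g (x i))"
      if x: "x \<in> (\<Pi>\<^sub>E i\<in>I. univ (As i))" for x
    proof -
      have 2: "app1 (prod_alg I As) g x \<in> (\<Pi>\<^sub>E i\<in>I. univ (As i))"
        using prod_eval[of "\<lambda>_. x" I As g] x app1_closed[OF isA wg] by (auto simp: app1_def)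
      show ?thesis using prod_app1[OF 2 i, of e] prod_app1[OF x i, of g] by simp
    qed
    show "\<exists>g. unary ar g \<and> app1 (prod_alg I As) e (app1 (prod_alg I As) g a) \<noteq> app1 (prod_alg I As) e (app1 (prod_alg I As) g b)"
      using k[OF a'] k[OF b'] d g by metis
  qed
  ultimately show ?thesis by auto
qed


lemma inj_part:
  assumes e_unary: "unary ar e" and mA: "models ar E A" and d: "dense ar e A"
    and h1: "hom UNIV ar A B \<phi>" and h2: "hom UNIV ar A B \<psi>"
    and eq: "\<forall>x\<in>univ (loc e A). \<phi> x = \<psi> x"
  shows "\<forall>x\<in>univ A. \<phi> x = \<psi> x"
proof -
  have isA: "is_alg UNIV ar A" using mA unfolding models_def by auto
  have we: "wf_trm ar e" using e_unary unfolding unary_def by auto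
  define Y where "Y = {x\<in>univ A. \<phi> x = \<psi> x}"
  have "app1 A e ` univ A \<subseteq> Y" using eq app1_closed[OF isA we] unfolding Y_def loc_def by auto
  moreover have "closed_in UNIV ar A Y" unfolding closed_in_def Y_def
  proof (intro ballI allI impI)
    fix f xs assume "length xs = ar f \<and> set xs \<subseteq> {x \<in> univ A. \<phi> x = \<psi> x}"
    then have l: "length xs = ar f" and s: "set xs \<subseteq> univ A" and s2: "\<forall>x\<in>set xs. \<phi> x = \<psi> x" by auto
    have "\<phi> (ops A f xs) = ops B f (map \<phi> xs)" using h1 l s unfolding hom_def by auto
    also have "\<dots> = ops B f (map \<psi> xs)" using s2 by (metis map_eq_conv)
    also have "\<dots> = \<psi> (ops A f xs)" using h2 l s unfolding hom_def by auto
    finally show "ops A f xs \<in> {x \<in> univ A. \<phi> x = \<psi> x}" using isA l s unfolding is_alg_def by auto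
  qed
  ultimately have "Sg UNIV ar A (app1 A e ` univ A) \<subseteq> Y" unfolding Sg_def Y_def by auto
  then show ?thesis using d unfolding dense_def Y_def by auto
qed

lemma interleave: "j < k \<Longrightarrow>
  eval I (subst (\<lambda>i. Var (i * k + j)) t) (\<lambda>n. R (n mod k) (n div k)) = eval I t (R j)"
  unfolding eval_subst by simp

lemma combine_eval: "eval I (Fn f (map (\<lambda>j. subst (\<lambda>i. Var (i * k + j)) (Tm j)) [0..<k])) (\<lambda>n. R (n mod k) (n div k))
   = I f (map (\<lambda>j. eval I (Tm j) (R j)) [0..<k])"
  using interleave[of _ k I _ R] by (auto intro!: arg_cong[where f="I f"])

lemma combine_wf: "ar f = k \<Longrightarrow> (\<forall>j<k. wf_trm ar (Tm j)) \<Longrightarrow>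
  wf_trm ar (Fn f (map (\<lambda>j. subst (\<lambda>i. Var (i * k + j)) (Tm j)) [0..<k]))"
  by (auto intro!: wf_subst)

lemma rep:
  assumes isA: "is_alg UNIV ar A" and we: "wf_trm ar e" and d: "dense ar e A"
    and x0: "x0 \<in> app1 A e ` univ A" and a: "a \<in> univ A"
  shows "\<exists>t \<rho>. wf_trm ar t \<and> (\<forall>n. \<rho> n \<in> app1 A e ` univ A) \<and> a = eval (ops A) t \<rho>"
proof -
  define X where "X = app1 A e ` univ A"
  have XA: "X \<subseteq> univ A" using app1_closed[OF isA we] X_def by auto
  define T where "T = {eval (ops A) t \<rho> | t \<rho>. wf_trm ar t \<and> (\<forall>n. \<rho> n \<in> X)}"
  have "X \<subseteq> T" unfolding T_def
  proof
    fix x assume "x \<in> X" then show "x \<in> {eval (ops A) t \<rho> | t \<rho>. wf_trm ar t \<and> (\<forall>n. \<rho> n \<in> X)}"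
      by (auto intro!: exI[of _ "Var 0"] exI[of _ "\<lambda>_. x"])
  qed
  moreover have "T \<subseteq> univ A" unfolding T_def using eval_closed[OF isA] XA by blast
  moreover have "closed_in UNIV ar A T" unfolding closed_in_def
  proof (intro ballI allI impI)
    fix f xs assume "length xs = ar f \<and> set xs \<subseteq> T"
    then have l: "length xs = ar f" and s: "set xs \<subseteq> T" by auto
    define k where "k = length xs"
    have "\<forall>j. \<exists>t \<rho>. wf_trm ar t \<and> (\<forall>n. \<rho> n \<in> X) \<and> (j < k \<longrightarrow> xs ! j = eval (ops A) t \<rho>)"
    proof
      fix j show "\<exists>t \<rho>. wf_trm ar t \<and> (\<forall>n. \<rho> n \<in> X) \<and> (j < k \<longrightarrow> xs ! j = eval (ops A) t \<rho>)"
      proof (cases "j < k")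
        case True
        then have "xs ! j \<in> T" using s k_def by auto
        then show ?thesis unfolding T_def by auto
      next
        case False
        then show ?thesis using x0 X_def by (auto intro!: exI[of _ "Var 0"] exI[of _ "\<lambda>_. x0"])
      qed
    qed
    then obtain Tm R where TR: "\<And>j. wf_trm ar (Tm j) \<and> (\<forall>n. R j n \<in> X) \<and> (j < k \<longrightarrow> xs ! j = eval (ops A) (Tm j) (R j))"
      by metis
    have "ops A f xs = ops A f (map (\<lambda>j. eval (ops A) (Tm j) (R j)) [0..<k])"
      using TR k_def by (auto intro!: arg_cong[where f="ops A f"] nth_equalityI)
    also have "\<dots> = eval (ops A) (Fn f (map (\<lambda>j. subst (\<lambda>i. Var (i * k + j)) (Tm j)) [0..<k])) (\<lambda>n. R (n mod k) (n div k))"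
      by (rule combine_eval[symmetric])
    finally have eq: "ops A f xs = eval (ops A) (Fn f (map (\<lambda>j. subst (\<lambda>i. Var (i * k + j)) (Tm j)) [0..<k])) (\<lambda>n. R (n mod k) (n div k))" .
    have w: "wf_trm ar (Fn f (map (\<lambda>j. subst (\<lambda>i. Var (i * k + j)) (Tm j)) [0..<k]))"
      using combine_wf[of ar f k Tm] TR l k_def by auto
    have r: "\<forall>n. R (n mod k) (n div k) \<in> X" using TR by auto
    show "ops A f xs \<in> T" unfolding T_def using eq w r by blast
  qed
  ultimately have "Sg UNIV ar A X \<subseteq> T" unfolding Sg_def by auto
  then have "a \<in> T" using d a unfolding dense_def X_def by auto
  then show ?thesis unfolding T_def X_def by blast
qed


lemma loc_hom_term:
  assumes hc: "hom (loc_syms ar) loc_ar (loc e A) (loc e B) \<chi>" and wu: "wf_trm ar u"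
    and \<tau>: "\<forall>n. \<tau> n \<in> app1 A e ` univ A"
  shows "\<chi> (app1 A e (eval (ops A) u \<tau>)) = app1 B e (eval (ops B) u (\<lambda>n. \<chi> (\<tau> n)))"
proof -
  define N where "N = Suc (Max (vars u))"
  have N: "vars u \<subseteq> {..<N}" unfolding N_def using finite_vars[of u] Max_ge by (auto simp: less_Suc_eq_le)
  define xs where "xs = map \<tau> [0..<N]"
  have mem: "(u, N) \<in> loc_syms ar" using wu N unfolding loc_syms_def by auto
  have len: "length xs = loc_ar (u, N)" unfolding xs_def loc_ar_def by simp
  have st: "set xs \<subseteq> univ (loc e A)" unfolding xs_def loc_def using \<tau> by auto
  have "\<chi> (ops (loc e A) (u, N) xs) = ops (loc e B) (u, N) (map \<chi> xs)"
    using hc mem len st unfolding hom_def by blast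
  moreover have "ops (loc e A) (u, N) xs = app1 A e (eval (ops A) u \<tau>)"
    unfolding loc_def xs_def using N
    by (auto intro!: arg_cong[where f="app1 A e"] eval_cong)
  moreover have "ops (loc e B) (u, N) (map \<chi> xs) = app1 B e (eval (ops B) u (\<lambda>n. \<chi> (\<tau> n)))"
    unfolding loc_def xs_def using N
    by (auto intro!: arg_cong[where f="app1 B e"] eval_cong)
  ultimately show ?thesis by simp
qed

lemma well_def:
  assumes isB: "is_alg UNIV ar B" and we: "wf_trm ar e" and sB: "separates ar e B"
    and hc: "hom (loc_syms ar) loc_ar (loc e A) (loc e B) \<chi>"
    and \<rho>: "\<forall>n. \<rho> n \<in> app1 A e ` univ A" and \<sigma>: "\<forall>n. \<sigma> n \<in> app1 A e ` univ A"
    and wt: "wf_trm ar t" and ws: "wf_trm ar s"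
    and eq: "eval (ops A) t \<rho> = eval (ops A) s \<sigma>"
  shows "eval (ops B) t (\<lambda>n. \<chi> (\<rho> n)) = eval (ops B) s (\<lambda>n. \<chi> (\<sigma> n))"
proof (rule ccontr)
  have cB: "\<chi> x \<in> univ B" if "x \<in> app1 A e ` univ A" for x
  proof -
    have "\<chi> x \<in> univ (loc e B)" using hc that unfolding hom_def loc_def by auto
    then show ?thesis using app1_closed[OF isB we] unfolding loc_def by auto
  qed
  define b1 where "b1 = eval (ops B) t (\<lambda>n. \<chi> (\<rho> n))"
  define b2 where "b2 = eval (ops B) s (\<lambda>n. \<chi> (\<sigma> n))"
  have b1: "b1 \<in> univ B" unfolding b1_def using eval_closed[OF isB wt] cB \<rho> by auto
  have b2: "b2 \<in> univ B" unfolding b2_def using eval_closed[OF isB ws] cB \<sigma> by auto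
  assume "b1_ne": "eval (ops B) t (\<lambda>n. \<chi> (\<rho> n)) \<noteq> eval (ops B) s (\<lambda>n. \<chi> (\<sigma> n))"
  then obtain g where g: "unary ar g" and d: "app1 B e (app1 B g b1) \<noteq> app1 B e (app1 B g b2)"
    using sB b1 b2 unfolding separates_def b1_def b2_def by blast
  have wg: "wf_trm ar g" using g unfolding unary_def by auto
  define R where "R = (\<lambda>j::nat. if j = 0 then \<rho> else \<sigma>)"
  define \<tau> where "\<tau> = (\<lambda>n. R (n mod 2) (n div 2))"
  have \<tau>X: "\<forall>n. \<tau> n \<in> app1 A e ` univ A" using \<rho> \<sigma> unfolding \<tau>_def R_def by auto
  define t' where "t' = subst (\<lambda>i. Var (i * 2 + 0)) t"
  define s' where "s' = subst (\<lambda>i. Var (i * 2 + 1)) s"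
  define ut where "ut = subst (\<lambda>_. t') g"
  define us where "us = subst (\<lambda>_. s') g"
  have wut: "wf_trm ar ut" unfolding ut_def t'_def by (auto intro!: wf_subst wg wt)
  have wus: "wf_trm ar us" unfolding us_def s'_def by (auto intro!: wf_subst wg ws)
  have a1: "eval (ops A) t' \<tau> = eval (ops A) t \<rho>"
    unfolding t'_def \<tau>_def using interleave[of 0 2 "ops A" t R] by (simp add: R_def)
  have a2: "eval (ops A) s' \<tau> = eval (ops A) s \<sigma>"
    unfolding s'_def \<tau>_def using interleave[of 1 2 "ops A" s R] by (simp add: R_def)
  have b1': "eval (ops B) t' (\<lambda>n. \<chi> (\<tau> n)) = b1"
    unfolding t'_def \<tau>_def b1_def using interleave[of 0 2 "ops B" t "\<lambda>j i. \<chi> (R j i)"] by (simp add: R_def)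
  have b2': "eval (ops B) s' (\<lambda>n. \<chi> (\<tau> n)) = b2"
    unfolding s'_def \<tau>_def b2_def using interleave[of 1 2 "ops B" s "\<lambda>j i. \<chi> (R j i)"] by (simp add: R_def)
  have A1: "eval (ops A) ut \<tau> = app1 A g (eval (ops A) t \<rho>)"
    unfolding ut_def eval_subst app1_def a1 ..
  have A2: "eval (ops A) us \<tau> = app1 A g (eval (ops A) s \<sigma>)"
    unfolding us_def eval_subst app1_def a2 ..
  have B1: "eval (ops B) ut (\<lambda>n. \<chi> (\<tau> n)) = app1 B g b1"
    unfolding ut_def eval_subst app1_def b1' ..
  have B2: "eval (ops B) us (\<lambda>n. \<chi> (\<tau> n)) = app1 B g b2"
    unfolding us_def eval_subst app1_def b2' ..
  have "app1 B e (app1 B g b1) = \<chi> (app1 A e (app1 A g (eval (ops A) t \<rho>)))"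
    using loc_hom_term[OF hc wut \<tau>X] A1 B1 by simp
  also have "\<dots> = \<chi> (app1 A e (app1 A g (eval (ops A) s \<sigma>)))" using eq by simp
  also have "\<dots> = app1 B e (app1 B g b2)"
    using loc_hom_term[OF hc wus \<tau>X] A2 B2 by simp
  finally show False using d by simp
qed


lemma surj_part:
  assumes e_unary: "unary ar e" and mA: "models ar E A" and mB: "models ar E B"
    and d: "dense ar e A" and sB: "separates ar e B"
    and hc: "hom (loc_syms ar) loc_ar (loc e A) (loc e B) \<chi>"
  shows "\<exists>\<phi>. hom UNIV ar A B \<phi> \<and> (\<forall>x\<in>univ (loc e A). \<phi> x = \<chi> x)"
proof -
  have isA: "is_alg UNIV ar A" using mA unfolding models_def by auto
  have isB: "is_alg UNIV ar B" using mB unfolding models_def by auto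
  have we: "wf_trm ar e" using e_unary unfolding unary_def by auto
  show ?thesis
  proof (cases "univ A = {}")
    case True
    have "hom UNIV ar A B \<chi>" unfolding hom_def
    proof (intro conjI ballI allI impI)
      fix f xs assume "length xs = ar f \<and> set xs \<subseteq> univ A"
      then have "xs = []" "ar f = 0" using True by auto
      then have "ops A f xs \<in> univ A" using isA unfolding is_alg_def by auto
      then show "\<chi> (ops A f xs) = ops B f (map \<chi> xs)" using True by auto
    qed (use True in auto)
    then show ?thesis by auto
  next
    case False
    then obtain a0 where a0: "a0 \<in> univ A" by auto
    define X where "X = app1 A e ` univ A"
    have x0: "app1 A e a0 \<in> X" using a0 X_def by auto
    have cB: "\<chi> x \<in> univ B" if "x \<in> X" for x
    proof -
      have "\<chi> x \<in> univ (loc e B)" using hc that unfolding hom_def loc_def X_def by auto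
      then show ?thesis using app1_closed[OF isB we] unfolding loc_def by auto
    qed
    define P where "P = (\<lambda>a b. \<exists>t \<rho>. wf_trm ar t \<and> (\<forall>n. \<rho> n \<in> X) \<and> a = eval (ops A) t \<rho>
       \<and> b = eval (ops B) t (\<lambda>n. \<chi> (\<rho> n)))"
    define \<phi> where "\<phi> = (\<lambda>a. SOME b. P a b)"
    have key: "\<phi> (eval (ops A) t \<rho>) = eval (ops B) t (\<lambda>n. \<chi> (\<rho> n))"
      if wt: "wf_trm ar t" and \<rho>: "\<forall>n. \<rho> n \<in> X" for t \<rho>
    proof -
      have "P (eval (ops A) t \<rho>) (eval (ops B) t (\<lambda>n. \<chi> (\<rho> n)))" unfolding P_def using wt \<rho> by blast
      then have "P (eval (ops A) t \<rho>) (\<phi> (eval (ops A) t \<rho>))" unfolding \<phi>_def by (rule someI)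
      then obtain t' \<rho>' where "wf_trm ar t'" "\<forall>n. \<rho>' n \<in> X" "eval (ops A) t \<rho> = eval (ops A) t' \<rho>'"
        "\<phi> (eval (ops A) t \<rho>) = eval (ops B) t' (\<lambda>n. \<chi> (\<rho>' n))" unfolding P_def by blast
      then show ?thesis using well_def[OF isB we sB hc, of \<rho> \<rho>' t t'] wt \<rho> unfolding X_def by auto
    qed
    have repA: "\<exists>t \<rho>. wf_trm ar t \<and> (\<forall>n. \<rho> n \<in> X) \<and> a = eval (ops A) t \<rho>" if "a \<in> univ A" for a
      using rep[OF isA we d _ that] x0 unfolding X_def by blast
    have "hom UNIV ar A B \<phi>" unfolding hom_def
    proof (intro conjI ballI allI impI)
      fix a assume "a \<in> univ A"
      then obtain t \<rho> where "wf_trm ar t" "\<forall>n. \<rho> n \<in> X" "a = eval (ops A) t \<rho>" using repA by blast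
      then show "\<phi> a \<in> univ B" using key eval_closed[OF isB] cB by auto
    next
      fix f xs assume "length xs = ar f \<and> set xs \<subseteq> univ A"
      then have l: "length xs = ar f" and s: "set xs \<subseteq> univ A" by auto
      define k where "k = length xs"
      have "\<forall>j. \<exists>t \<rho>. wf_trm ar t \<and> (\<forall>n. \<rho> n \<in> X) \<and> (j < k \<longrightarrow> xs ! j = eval (ops A) t \<rho>)"
      proof
        fix j show "\<exists>t \<rho>. wf_trm ar t \<and> (\<forall>n. \<rho> n \<in> X) \<and> (j < k \<longrightarrow> xs ! j = eval (ops A) t \<rho>)"
        proof (cases "j < k")
          case True
          then have "xs ! j \<in> univ A" using s k_def by auto
          then show ?thesis using repA by blast
        next
          case False
          then show ?thesis using x0 by (auto intro!: exI[of _ "Var 0"] exI[of _ "\<lambda>_. app1 A e a0"])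
        qed
      qed
      then obtain Tm R where TR: "\<And>j. wf_trm ar (Tm j) \<and> (\<forall>n. R j n \<in> X) \<and> (j < k \<longrightarrow> xs ! j = eval (ops A) (Tm j) (R j))"
        by metis
      define C where "C = Fn f (map (\<lambda>j. subst (\<lambda>i. Var (i * k + j)) (Tm j)) [0..<k])"
      define \<tau> where "\<tau> = (\<lambda>n. R (n mod k) (n div k))"
      have "ops A f xs = ops A f (map (\<lambda>j. eval (ops A) (Tm j) (R j)) [0..<k])"
        using TR k_def by (auto intro!: arg_cong[where f="ops A f"] nth_equalityI)
      also have "\<dots> = eval (ops A) C \<tau>"
        unfolding C_def \<tau>_def by (rule combine_eval[symmetric])
      finally have eqA: "ops A f xs = eval (ops A) C \<tau>" .
      have wC: "wf_trm ar C" unfolding C_def using combine_wf[of ar f k Tm] TR l k_def by auto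
      have \<tau>X: "\<forall>n. \<tau> n \<in> X" using TR \<tau>_def by auto
      have "\<phi> (ops A f xs) = eval (ops B) C (\<lambda>n. \<chi> (\<tau> n))" unfolding eqA using key[OF wC \<tau>X] .
      also have "\<dots> = ops B f (map (\<lambda>j. eval (ops B) (Tm j) (\<lambda>i. \<chi> (R j i))) [0..<k])"
        unfolding C_def \<tau>_def using combine_eval[of "ops B" f k Tm "\<lambda>j i. \<chi> (R j i)"] by simp
      also have "\<dots> = ops B f (map \<phi> xs)"
        using TR key k_def by (auto intro!: arg_cong[where f="ops B f"] nth_equalityI)
      finally show "\<phi> (ops A f xs) = ops B f (map \<phi> xs)" .
    qed
    moreover have "\<forall>x\<in>univ (loc e A). \<phi> x = \<chi> x"
    proof
      fix x assume "x \<in> univ (loc e A)"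
      then have "x \<in> X" unfolding loc_def X_def by auto
      then show "\<phi> x = \<chi> x" using key[of "Var 0" "\<lambda>_. x"] by simp
    qed
    ultimately show ?thesis by blast
  qed
qed

theorem lemma2p2:
  fixes ar :: "'f \<Rightarrow> nat"
    and E :: "('f trm \<times> 'f trm) set"
    and e :: "'f trm"
  assumes E_wf: "\<forall>(s, t)\<in>E. wf_trm ar s \<and> wf_trm ar t"
    and e_unary: "unary ar e"
    and idem_a: "\<And>A :: ('f, 'a) alg. models ar E A \<Longrightarrow>
                   \<forall>x\<in>univ A. app1 A e (app1 A e x) = app1 A e x"
    and idem_b: "\<And>B :: ('f, 'b) alg. models ar E B \<Longrightarrow>
                   \<forall>x\<in>univ B. app1 B e (app1 B e x) = app1 B e x"
  shows
    \<comment> \<open>(1) the class of separated members of the variety is closed under I, S, P\<close>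
    "(\<forall>(A :: ('f, 'a) alg) (B :: ('f, 'b) alg) h.
        models ar E A \<and> separates ar e A \<and> iso UNIV ar A B h
        \<longrightarrow> models ar E B \<and> separates ar e B)
   \<and> (\<forall>(A :: ('f, 'a) alg) B.
        models ar E A \<and> separates ar e A \<and> subalg UNIV ar B A
        \<longrightarrow> models ar E B \<and> separates ar e B)
   \<and> (\<forall>(I :: 'i set) (As :: 'i \<Rightarrow> ('f, 'a) alg).
        (\<forall>i\<in>I. models ar E (As i) \<and> separates ar e (As i))
        \<longrightarrow> models ar E (prod_alg I As) \<and> separates ar e (prod_alg I As))
   \<and> \<comment> \<open>(2)(i) restriction to e(A) is injective on Hom(A,B) if e is dense for A\<close>
     (\<forall>(A :: ('f, 'a) alg) (B :: ('f, 'b) alg).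
        models ar E A \<and> models ar E B \<and> dense ar e A \<longrightarrow>
        (\<forall>\<phi> \<psi>. hom UNIV ar A B \<phi> \<and> hom UNIV ar A B \<psi> \<and> (\<forall>x\<in>univ (loc e A). \<phi> x = \<psi> x)
               \<longrightarrow> (\<forall>x\<in>univ A. \<phi> x = \<psi> x)))
   \<and> \<comment> \<open>(2)(ii) surjective onto Hom(e(A),e(B)) if moreover e separates B\<close>
     (\<forall>(A :: ('f, 'a) alg) (B :: ('f, 'b) alg).
        models ar E A \<and> models ar E B \<and> dense ar e A \<and> separates ar e B \<longrightarrow>
        (\<forall>\<chi>. hom (loc_syms ar) loc_ar (loc e A) (loc e B) \<chi>
              \<longrightarrow> (\<exists>\<phi>. hom UNIV ar A B \<phi> \<and> (\<forall>x\<in>univ (loc e A). \<phi> x = \<chi> x))))"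
  apply (intro conjI)
  using iso_part[OF E_wf e_unary] apply blast
  using sub_part[OF E_wf e_unary] apply blast
  using prod_part[OF E_wf e_unary] apply blast
  using inj_part[OF e_unary] apply blast
  using surj_part[OF e_unary] apply blast
  done

end
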